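(* Let $f$ be a $2\pi$-periodic continuous function with modulus of continuity $\omega(t)$, and let $A=(a_{n,k})$ be a lower triangular infinite matrix of real numbers ($a_{n,k}=0$ for $k>n$) with $a_{n,k}\ge 0$ and $\sum_{k=0}^n a_{n,k}=1$ for all $n$. Let $\beta\ge0$ and suppose \[ \sum_{k=0}^{m-1}(k+1)^{\beta}\left|\frac{a_{n,k}}{(k+1)^{\beta}}-\frac{a_{n,k+1}}{(k+2)^{\beta}}\right|=\mathcal{O}(a_{n,m}) \] for all $m=0,1,\dots,n$ and $n=0,1,\dots$. Suppose there is a function $H(u)\ge0$ such that \[ \int_u^{\pi} t^{-2}\omega(t)\,dt=\mathcal{O}\big(H(u)\big)\ (u\to+0)\quad\text{and}\quad \int_0^{t}H(u)\,du=\mathcal{O}\big(tH(t)\big)\ (t\to+0). \] Then \[ \|T_{n,A}(f)-f\|=\mathcal{O}\big(a_{n,n}H(a_{n,n})\big). \]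
   Context: $S_k(f;x)$ is the $k$-th partial sum of the Fourier series of $f$ at $x$, and $T_{n,A}(f;x):=\sum_{k=0}^n a_{n,k}S_k(f;x)$. $\|\cdot\|$ is the sup-norm. $\omega(\delta)=\sup_{|h|\le\delta}\sup_x|f(x+h)-f(x)|$. The notation $u=\mathcal{O}(v)$ means $u\le Cv$ for a positive constant $C$ (independent of $n$). *)

theory Defs
  imports "HOL-Analysis.Analysis"
begin

definition fourier_a :: "(real \<Rightarrow> real) \<Rightarrow> nat \<Rightarrow> real" where
  "fourier_a f j = (1 / pi) * integral {-pi..pi} (\<lambda>t. f t * cos (real j * t))"

definition fourier_b :: "(real \<Rightarrow> real) \<Rightarrow> nat \<Rightarrow> real" where
  "fourier_b f j = (1 / pi) * integral {-pi..pi} (\<lambda>t. f t * sin (real j * t))"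

definition fourier_partial_sum :: "(real \<Rightarrow> real) \<Rightarrow> nat \<Rightarrow> real \<Rightarrow> real" where
  "fourier_partial_sum f k x =
     fourier_a f 0 / 2 +
     (\<Sum>j=1..k. fourier_a f j * cos (real j * x) + fourier_b f j * sin (real j * x))"

definition matrix_mean :: "(nat \<Rightarrow> nat \<Rightarrow> real) \<Rightarrow> (real \<Rightarrow> real) \<Rightarrow> nat \<Rightarrow> real \<Rightarrow> real" where
  "matrix_mean a f n x = (\<Sum>k=0..n. a n k * fourier_partial_sum f k x)"

definition supnorm :: "(real \<Rightarrow> real) \<Rightarrow> real" where
  "supnorm g = (SUP x. \<bar>g x\<bar>)"

definition modulus_cont :: "(real \<Rightarrow> real) \<Rightarrow> real \<Rightarrow> real" where
  "modulus_cont f \<delta> = Sup {\<bar>f (x + h) - f x\<bar> | x h. \<bar>h\<bar> \<le> \<delta>}"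

end

theory Submission
  imports Defs
begin


definition Dk :: "nat \<Rightarrow> real \<Rightarrow> real" where
  "Dk k s = 1/2 + (\<Sum>j=1..k. cos (real j * s))"

lemma trig_aux1: "sin ((A::real) - h) + 2 * sin h * cos A = sin (A + h)"
  by (simp add: sin_add sin_diff)

lemma trig_aux2: "1 - cos ((A::real) - h) + 2 * sin h * sin A = 1 - cos (A + h)"
  by (simp add: cos_add cos_diff)

lemma Dk_closed: "2 * sin (s/2) * Dk k s = sin ((real k + 1/2) * s)"
proof (induction k)
  case 0 then show ?case by (simp add: Dk_def)
next
  case (Suc k)
  define A where "A = real (Suc k) * s"
  have e: "Dk (Suc k) s = Dk k s + cos A" by (simp add: Dk_def A_def)
  have a: "(real (Suc k) + 1/2) * s = A + s/2" by (simp add: algebra_simps A_def)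
  have b: "(real k + 1/2) * s = A - s/2" by (simp add: algebra_simps A_def)
  have "2 * sin (s/2) * Dk (Suc k) s = 2 * sin (s/2) * Dk k s + 2 * sin (s/2) * cos A"
    unfolding e by (simp add: distrib_left)
  also have "\<dots> = sin (A - s/2) + 2 * sin (s/2) * cos A" using Suc b by simp
  also have "\<dots> = sin (A + s/2)" by (rule trig_aux1)
  finally show ?case using a by simp
qed

lemma sinsum_closed: "2 * sin (s/2) * (\<Sum>k\<le>j. sin ((real k + 1/2) * s)) = 1 - cos ((real j + 1) * s)"
proof (induction j)
  case 0
  have "cos (2 * (s/2)) = 1 - 2 * (sin (s/2))^2" by (rule cos_double_sin)
  then show ?case by (simp add: power2_eq_square)
next
  case (Suc j)
  define A where "A = (real (Suc j) + 1/2) * s"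
  have a: "(real j + 1) * s = A - s/2" by (simp add: algebra_simps A_def)
  have b: "(real (Suc j) + 1) * s = A + s/2" by (simp add: algebra_simps A_def)
  have "2 * sin (s/2) * (\<Sum>k\<le>Suc j. sin ((real k + 1/2) * s))
     = 2 * sin (s/2) * (\<Sum>k\<le>j. sin ((real k + 1/2) * s)) + 2 * sin (s/2) * sin A"
    by (simp add: distrib_left A_def)
  also have "\<dots> = 1 - cos (A - s/2) + 2 * sin (s/2) * sin A" using Suc a by simp
  also have "\<dots> = 1 - cos (A + s/2)" by (rule trig_aux2)
  finally show ?case using b by simp
qed

lemma abel:
  fixes u v :: "nat \<Rightarrow> real"
  shows "(\<Sum>k\<le>n. u k * v k) = u n * (\<Sum>i\<le>n. v i) - (\<Sum>k<n. (u (Suc k) - u k) * (\<Sum>i\<le>k. v i))"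
proof (induction n)
  case 0 then show ?case by simp
next
  case (Suc n) then show ?case by (simp add: algebra_simps)
qed

lemma abel_bound:
  fixes u v B :: "nat \<Rightarrow> real"
  assumes "\<And>k. k \<le> n \<Longrightarrow> \<bar>\<Sum>i\<le>k. v i\<bar> \<le> B k"
  shows "\<bar>\<Sum>k\<le>n. u k * v k\<bar> \<le> \<bar>u n\<bar> * B n + (\<Sum>k<n. \<bar>u (Suc k) - u k\<bar> * B k)"
proof -
  have "\<bar>\<Sum>k\<le>n. u k * v k\<bar> \<le> \<bar>u n * (\<Sum>i\<le>n. v i)\<bar> + \<bar>\<Sum>k<n. (u (Suc k) - u k) * (\<Sum>i\<le>k. v i)\<bar>"
    unfolding abel by linarith
  also have "\<dots> \<le> \<bar>u n\<bar> * B n + (\<Sum>k<n. \<bar>u (Suc k) - u k\<bar> * B k)"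
  proof (rule add_mono)
    show "\<bar>u n * (\<Sum>i\<le>n. v i)\<bar> \<le> \<bar>u n\<bar> * B n"
      unfolding abs_mult by (rule mult_left_mono) (use assms in auto)
    have "\<bar>\<Sum>k<n. (u (Suc k) - u k) * (\<Sum>i\<le>k. v i)\<bar> \<le> (\<Sum>k<n. \<bar>(u (Suc k) - u k) * (\<Sum>i\<le>k. v i)\<bar>)"
      by (rule sum_abs)
    also have "\<dots> \<le> (\<Sum>k<n. \<bar>u (Suc k) - u k\<bar> * B k)"
      unfolding abs_mult by (rule sum_mono, rule mult_left_mono) (use assms in auto)
    finally show "\<bar>\<Sum>k<n. (u (Suc k) - u k) * (\<Sum>i\<le>k. v i)\<bar> \<le> (\<Sum>k<n. \<bar>u (Suc k) - u k\<bar> * B k)" .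
  qed
  finally show ?thesis .
qed

lemma sin_half_lower:
  assumes "0 \<le> s" "s \<le> pi"
  shows "s / 8 \<le> sin (s/2)"
proof -
  let ?y = "s/2"
  show ?thesis
  proof (cases "?y \<le> pi/4")
    case True
    show ?thesis
    proof (cases "s = 0")
      case True then show ?thesis by simp
    next
      case False
      then have ypos: "0 < ?y" using assms by simp
      obtain z where z: "0 < z" "z < ?y" "sin ?y - sin 0 = (?y - 0) * cos z"
        using MVT2[of 0 ?y sin cos] ypos by (auto intro: DERIV_sin)
      have "cos (pi/4) \<le> cos z"
        using z True by (intro cos_monotone_0_pi_le) auto
      moreover have "cos (pi/4) \<ge> 1/2"
        by (simp add: cos_45 real_le_rsqrt)
      ultimately have "cos z \<ge> 1/2" by linarith
      then have "?y * (1/2) \<le> ?y * cos z" using ypos by (intro mult_left_mono) auto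
      moreover have "sin ?y = ?y * cos z" using z(3) by simp
      ultimately show ?thesis using assms by linarith
    qed
  next
    case False
    have "sin (pi/4) \<le> sin ?y"
      using False assms by (intro sin_monotone_2pi_le) auto
    moreover have "sin (pi/4) \<ge> 1/2" by (simp add: sin_45 real_le_rsqrt)
    moreover have "s/8 \<le> 1/2" using assms pi_less_4 by simp
    ultimately show ?thesis by linarith
  qed
qed



lemma sinsum_bound:
  assumes "0 < sin (s/2)"
  shows "\<bar>\<Sum>k\<le>j. sin ((real k + 1/2) * s)\<bar> \<le> 1 / sin (s/2)"
proof -
  have e: "(\<Sum>k\<le>j. sin ((real k + 1/2) * s)) = (1 - cos ((real j + 1) * s)) / (2 * sin (s/2))"
    using sinsum_closed[of s j] assms by (simp add: field_simps)
  have "\<bar>1 - cos ((real j + 1) * s)\<bar> \<le> 2"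
    using cos_ge_minus_one[of "(real j + 1) * s"] cos_le_one[of "(real j + 1) * s"] by linarith
  then have "\<bar>1 - cos ((real j + 1) * s)\<bar> / (2 * sin (s/2)) \<le> 2 / (2 * sin (s/2))"
    using assms by (intro divide_right_mono) auto
  then show ?thesis unfolding e using assms by (simp add: abs_divide)
qed

lemma weighted_bound:
  assumes "0 < sin (s/2)" "\<beta> \<ge> 0"
  shows "\<bar>\<Sum>k\<le>j. (real k + 1) powr \<beta> * sin ((real k + 1/2) * s)\<bar> \<le> 2 * (real j + 1) powr \<beta> / sin (s/2)"
proof -
  define w where "w k = (real k + 1) powr \<beta>" for k :: nat
  define M where "M = 1 / sin (s/2)"
  have mono: "w k \<le> w (Suc k)" for k unfolding w_def using assms(2) by (intro powr_mono2) auto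
  have w0: "w 0 = 1" by (simp add: w_def)
  have wpos: "w k > 0" for k by (simp add: w_def)
  have Mpos: "M > 0" using assms by (simp add: M_def)
  have "\<bar>\<Sum>k\<le>j. w k * sin ((real k + 1/2) * s)\<bar> \<le> \<bar>w j\<bar> * M + (\<Sum>k<j. \<bar>w (Suc k) - w k\<bar> * M)"
    by (rule abel_bound) (use sinsum_bound[OF assms(1)] in \<open>simp add: M_def\<close>)
  also have "(\<Sum>k<j. \<bar>w (Suc k) - w k\<bar> * M) = (\<Sum>k<j. (w (Suc k) - w k)) * M"
    using mono by (simp add: sum_distrib_right)
  also have "(\<Sum>k<j. (w (Suc k) - w k)) = w j - w 0" by (rule sum_lessThan_telescope)
  finally have "\<bar>\<Sum>k\<le>j. w k * sin ((real k + 1/2) * s)\<bar> \<le> w j * M + (w j - 1) * M"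
    using wpos[of j] w0 by simp
  also have "\<dots> \<le> 2 * w j * M" using Mpos by (simp add: algebra_simps)
  also have "2 * w j * M = 2 * (real j + 1) powr \<beta> / sin (s/2)" by (simp add: w_def M_def)
  finally show ?thesis by (simp only: w_def)
qed

lemma row_bound:
  fixes a :: "nat \<Rightarrow> real"
  assumes "0 < sin (s/2)" "\<beta> \<ge> 0" "\<And>k. a k \<ge> 0" "C \<ge> 0"
    and cond: "(\<Sum>k<n. (real k + 1) powr \<beta> *
          \<bar>a k / (real k + 1) powr \<beta> - a (k + 1) / (real k + 2) powr \<beta>\<bar>) \<le> C * a n"
  shows "\<bar>\<Sum>k\<le>n. a k * sin ((real k + 1/2) * s)\<bar> \<le> 2 * (1 + C) * a n / sin (s/2)"
proof -
  define w where "w k = (real k + 1) powr \<beta>" for k :: nat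
  define b where "b k = a k / w k" for k
  define M where "M = 1 / sin (s/2)"
  define Q where "Q = (\<Sum>k<n. (real k + 1) powr \<beta> *
          \<bar>a k / (real k + 1) powr \<beta> - a (k + 1) / (real k + 2) powr \<beta>\<bar>)"
  have Mpos: "M > 0" using assms(1) by (simp add: M_def)
  have wpos: "w k > 0" for k by (simp add: w_def)
  have ab: "a k = b k * w k" for k using wpos[of k] by (simp add: b_def)
  have wS: "w (Suc k) = (real k + 2) powr \<beta>" for k by (simp add: w_def add.commute)
  have V: "\<bar>\<Sum>i\<le>k. w i * sin ((real i + 1/2) * s)\<bar> \<le> 2 * w k * M" for k
  proof -
    have "\<bar>\<Sum>i\<le>k. w i * sin ((real i + 1/2) * s)\<bar> \<le> 2 * (real k + 1) powr \<beta> / sin (s/2)"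
      unfolding w_def by (rule weighted_bound[OF assms(1,2)])
    also have "\<dots> = 2 * w k * M" by (simp add: w_def M_def)
    finally show ?thesis .
  qed
  have eq: "(\<Sum>k\<le>n. a k * sin ((real k + 1/2) * s)) = (\<Sum>k\<le>n. b k * (w k * sin ((real k + 1/2) * s)))"
    by (rule sum.cong) (simp_all add: ab[of k for k] mult.assoc)
  have "\<bar>\<Sum>k\<le>n. b k * (w k * sin ((real k + 1/2) * s))\<bar> \<le>
        \<bar>b n\<bar> * (2 * w n * M) + (\<Sum>k<n. \<bar>b (Suc k) - b k\<bar> * (2 * w k * M))"
    by (rule abel_bound) (rule V)
  also have "\<bar>b n\<bar> * (2 * w n * M) = 2 * M * a n"
  proof -
    have "\<bar>b n\<bar> = b n" using assms(3)[of n] wpos[of n] by (simp add: b_def)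
    then show ?thesis using ab[of n] by simp
  qed
  also have "(\<Sum>k<n. \<bar>b (Suc k) - b k\<bar> * (2 * w k * M)) = 2 * M * Q"
    unfolding sum_distrib_left Q_def
  proof (rule sum.cong)
    fix k assume "k \<in> {..<n}"
    have "\<bar>b (Suc k) - b k\<bar> = \<bar>b k - b (Suc k)\<bar>" by (rule abs_minus_commute)
    then show "\<bar>b (Suc k) - b k\<bar> * (2 * w k * M) = 2 * M * ((real k + 1) powr \<beta> *
          \<bar>a k / (real k + 1) powr \<beta> - a (k + 1) / (real k + 2) powr \<beta>\<bar>)"
      unfolding b_def wS by (simp add: w_def)
  qed simp
  also have "2 * M * a n + 2 * M * Q \<le> 2 * M * a n + 2 * M * (C * a n)"
    using cond Mpos unfolding Q_def[symmetric] by simp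
  also have "\<dots> = 2 * (1 + C) * a n / sin (s/2)" by (simp add: M_def algebra_simps add_divide_distrib)
  finally show ?thesis unfolding eq .
qed



lemma sin_half_pos: "0 < s \<Longrightarrow> s \<le> pi \<Longrightarrow> 0 < sin (s/2)"
  using sin_half_lower[of s] by linarith

lemma Dk_bound:
  assumes "0 < s" "s \<le> pi"
  shows "\<bar>Dk k s\<bar> \<le> 4 / s"
proof -
  have p: "0 < sin (s/2)" by (rule sin_half_pos) (use assms in auto)
  have l: "s / 8 \<le> sin (s/2)" using sin_half_lower assms by auto
  have e: "Dk k s = sin ((real k + 1/2) * s) / (2 * sin (s/2))"
  proof -
    have "2 * sin (s/2) \<noteq> 0" using p by simp
    then show ?thesis by (metis Dk_closed nonzero_mult_div_cancel_left)
  qed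
  have "\<bar>Dk k s\<bar> = \<bar>sin ((real k + 1/2) * s)\<bar> / (2 * sin (s/2))"
    unfolding e using p by (simp add: abs_divide)
  also have "\<dots> \<le> 1 / (2 * sin (s/2))"
    using p by (intro divide_right_mono) auto
  also have "\<dots> \<le> 1 / (2 * (s/8))"
    using p l assms by (intro divide_left_mono mult_left_mono) auto
  also have "\<dots> = 4 / s" by simp
  finally show ?thesis .
qed

lemma K_small:
  fixes a :: "nat \<Rightarrow> real"
  assumes "0 < s" "s \<le> pi" "\<And>k. a k \<ge> 0" "(\<Sum>k\<le>n. a k) = 1"
  shows "\<bar>\<Sum>k\<le>n. a k * Dk k s\<bar> \<le> 4 / s"
proof -
  have "\<bar>\<Sum>k\<le>n. a k * Dk k s\<bar> \<le> (\<Sum>k\<le>n. \<bar>a k * Dk k s\<bar>)" by (rule sum_abs)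
  also have "\<dots> \<le> (\<Sum>k\<le>n. a k * (4 / s))"
  proof (rule sum_mono)
    fix k assume "k \<in> {..n}"
    have "a k * \<bar>Dk k s\<bar> \<le> a k * (4 / s)"
      by (rule mult_left_mono[OF Dk_bound[OF assms(1,2)] assms(3)])
    then show "\<bar>a k * Dk k s\<bar> \<le> a k * (4 / s)" using assms(3)[of k] by (simp add: abs_mult)
  qed
  also have "\<dots> = (\<Sum>k\<le>n. a k) * (4 / s)" by (rule sum_distrib_right[symmetric])
  also have "\<dots> = 4 / s" using assms(4) by simp
  finally show ?thesis .
qed

lemma K_large:
  fixes a :: "nat \<Rightarrow> real"
  assumes "0 < s" "s \<le> pi" "\<beta> \<ge> 0" "\<And>k. a k \<ge> 0" "C \<ge> 0"
    and cond: "(\<Sum>k<n. (real k + 1) powr \<beta> *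
          \<bar>a k / (real k + 1) powr \<beta> - a (k + 1) / (real k + 2) powr \<beta>\<bar>) \<le> C * a n"
  shows "\<bar>\<Sum>k\<le>n. a k * Dk k s\<bar> \<le> 64 * (1 + C) * a n / s^2"
proof -
  have p: "0 < sin (s/2)" by (rule sin_half_pos) (use assms in auto)
  have l: "s / 8 \<le> sin (s/2)" using sin_half_lower assms by auto
  have e: "2 * sin (s/2) * (\<Sum>k\<le>n. a k * Dk k s) = (\<Sum>k\<le>n. a k * sin ((real k + 1/2) * s))"
    unfolding sum_distrib_left
  proof (rule sum.cong)
    fix k assume "k \<in> {..n}"
    show "2 * sin (s/2) * (a k * Dk k s) = a k * sin ((real k + 1/2) * s)"
      using Dk_closed[of s k] by (metis mult.left_commute)
  qed simp
  have rb: "\<bar>\<Sum>k\<le>n. a k * sin ((real k + 1/2) * s)\<bar> \<le> 2 * (1 + C) * a n / sin (s/2)"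
    by (rule row_bound[OF p assms(3,4,5) cond])
  have an: "a n \<ge> 0" using assms(4) by simp
  have "\<bar>\<Sum>k\<le>n. a k * Dk k s\<bar> = \<bar>\<Sum>k\<le>n. a k * sin ((real k + 1/2) * s)\<bar> / (2 * sin (s/2))"
  proof -
    have "2 * sin (s/2) \<noteq> 0" using p by simp
    then have "(\<Sum>k\<le>n. a k * Dk k s) = (\<Sum>k\<le>n. a k * sin ((real k + 1/2) * s)) / (2 * sin (s/2))"
      using e by (metis nonzero_mult_div_cancel_left)
    then show ?thesis using p by (simp add: abs_divide)
  qed
  also have "\<dots> \<le> (2 * (1 + C) * a n / sin (s/2)) / (2 * sin (s/2))"
    using rb p by (intro divide_right_mono) auto
  also have "\<dots> = (1 + C) * a n / (sin (s/2))^2" using p by (simp add: power2_eq_square field_simps)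
  also have "\<dots> \<le> (1 + C) * a n / (s/8)^2"
    using p l assms an by (intro divide_left_mono mult_pos_pos power_mono mult_nonneg_nonneg) auto
  also have "\<dots> = 64 * (1 + C) * a n / s^2" by (simp add: power2_eq_square)
  finally show ?thesis .
qed



lemma cont_Dk_UNIV: "continuous_on UNIV (Dk k)"
  unfolding Dk_def by (intro continuous_intros)

lemma cont_Dk[continuous_intros]: "continuous_on S g \<Longrightarrow> continuous_on S (\<lambda>t. Dk k (g t))"
  by (rule continuous_on_compose2[OF cont_Dk_UNIV]) auto

lemma cont_comp: "continuous_on UNIV f \<Longrightarrow> continuous_on S g \<Longrightarrow> continuous_on S (\<lambda>t. f (g t))"
  by (rule continuous_on_compose2[of UNIV f S g]) auto

lemma Dk_even: "Dk k (-s) = Dk k s"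
  by (simp add: Dk_def)

lemma Dk_periodic: "Dk k (s + 2 * pi) = Dk k s"
proof -
  have "cos (real j * (s + 2 * pi)) = cos (real j * s)" for j :: nat
  proof -
    have "real j * (s + 2 * pi) = real j * s + 2 * real j * pi" by (simp add: algebra_simps)
    then show ?thesis by (simp only: cos_add cos_2npi sin_2npi)
  qed
  then show ?thesis by (simp add: Dk_def)
qed

lemma per_nat:
  assumes "\<And>x. g (x + 2 * pi) = g x"
  shows "g (x + real n * (2 * pi)) = g x"
proof (induction n)
  case 0 then show ?case by simp
next
  case (Suc n)
  have "g (x + real (Suc n) * (2 * pi)) = g ((x + real n * (2 * pi)) + 2 * pi)"
    by (simp add: algebra_simps)
  then show ?case using assms Suc by simp
qed

lemma per_int:
  assumes "\<And>x. g (x + 2 * pi) = g x"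
  shows "g (x + real_of_int m * (2 * pi)) = g x"
proof (cases "m \<ge> 0")
  case True
  then obtain n where "m = int n" by (metis nonneg_eq_int)
  then show ?thesis using per_nat[of g, OF assms] by simp
next
  case False
  define n where "n = nat (- m)"
  have n: "m = - int n" using False by (simp add: n_def)
  have "g (x + real_of_int m * (2 * pi)) = g ((x + real_of_int m * (2 * pi)) + real n * (2 * pi))"
    using per_nat[of g, OF assms] by simp
  then show ?thesis using n by simp
qed

lemma per_reduce:
  assumes "\<And>x. g (x + 2 * pi) = g x"
  shows "\<exists>y. 0 \<le> y \<and> y \<le> 2 * pi \<and> g x = g y"
proof -
  define m where "m = \<lfloor>x / (2 * pi)\<rfloor>"
  define y where "y = x + real_of_int (- m) * (2 * pi)"
  have "real_of_int m \<le> x / (2 * pi)" "x / (2 * pi) < real_of_int m + 1"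
    unfolding m_def by linarith+
  then have "real_of_int m * (2 * pi) \<le> x" "x < (real_of_int m + 1) * (2 * pi)"
    using pi_gt_zero by (simp_all add: field_simps)
  then have "0 \<le> y" "y \<le> 2 * pi" unfolding y_def by (simp_all add: algebra_simps)
  moreover have "g x = g y" unfolding y_def
    using per_int[of g, OF assms, of "x - real_of_int m * (2*pi)" m] by simp
  ultimately show ?thesis by blast
qed

lemma shift_integral:
  fixes h :: "real \<Rightarrow> real"
  assumes cont: "continuous_on UNIV h" and per: "\<And>x. h (x + 2 * pi) = h x"
  shows "integral {-pi..pi} (\<lambda>s. h (s + c)) = integral {-pi..pi} h"
proof -
  obtain c' where c': "0 \<le> c'" "c' \<le> 2 * pi" "(\<lambda>s. h (s + c)) = (\<lambda>s. h (s + c'))"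
  proof -
    define m where "m = \<lfloor>c / (2 * pi)\<rfloor>"
    define c' where "c' = c + real_of_int (- m) * (2 * pi)"
    have "real_of_int m \<le> c / (2 * pi)" "c / (2 * pi) < real_of_int m + 1"
      unfolding m_def by linarith+
    then have "real_of_int m * (2 * pi) \<le> c" "c < (real_of_int m + 1) * (2 * pi)"
      using pi_gt_zero by (simp_all add: field_simps)
    then have "0 \<le> c'" "c' \<le> 2 * pi" unfolding c'_def by (simp_all add: algebra_simps)
    moreover have "(\<lambda>s. h (s + c)) = (\<lambda>s. h (s + c'))"
    proof
      fix s
      have "h (s + c') = h ((s + c) + real_of_int (- m) * (2 * pi))" by (simp add: c'_def algebra_simps)
      then show "h (s + c) = h (s + c')"
        using per_int[of h, OF per, of "s + c - real_of_int m * (2*pi)" m] by simp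
    qed
    ultimately show ?thesis using that by blast
  qed
  have int: "h integrable_on {a..b}" for a b
    by (rule integrable_continuous_real) (use cont continuous_on_subset in blast)
  have "integral {-pi..pi} (\<lambda>s. h (s + c')) = integral {-pi + c'..pi + c'} h"
    using integral_shift_real_ivl[of "-pi + c'" c' "pi + c'" h] by simp
  also have "\<dots> = integral {-pi + c'..pi} h + integral {pi..pi + c'} h"
    using Henstock_Kurzweil_Integration.integral_combine[where a="-pi + c'" and c=pi and b="pi + c'" and f=h] c' int by simp
  also have "integral {pi..pi + c'} h = integral {-pi..-pi + c'} (\<lambda>x. h (x + 2 * pi))"
    using integral_shift_real_ivl[of pi "2 * pi" "pi + c'" h] by simp
  also have "\<dots> = integral {-pi..-pi + c'} h" using per by simp
  also have "integral {-pi + c'..pi} h + integral {-pi..-pi + c'} h = integral {-pi..pi} h"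
    using c' by (subst add.commute, intro Henstock_Kurzweil_Integration.integral_combine int) auto
  finally show ?thesis using c'(3) by simp
qed

lemma integral_cos_j:
  assumes "j \<ge> 1"
  shows "integral {-pi..pi} (\<lambda>s. cos (real j * s)) = 0"
proof -
  have jp: "real j > 0" using assms by simp
  have "((\<lambda>s. cos (real j * s)) has_integral (sin (real j * pi) / real j - sin (real j * (-pi)) / real j)) {-pi..pi}"
  proof (rule fundamental_theorem_of_calculus)
    show "- pi \<le> pi" by simp
    fix x assume "x \<in> {-pi..pi}"
    have "((\<lambda>s. sin (real j * s) / real j) has_real_derivative (cos (real j * x) * real j / real j)) (at x)"
      by (auto intro!: derivative_eq_intros)
    then show "((\<lambda>s. sin (real j * s) / real j) has_vector_derivative cos (real j * x)) (at x within {-pi..pi})"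
      using jp by (simp add: has_real_derivative_iff_has_vector_derivative has_vector_derivative_at_within)
  qed
  moreover have "sin (real j * pi) = 0" by (simp add: sin_npi)
  moreover have "sin (real j * (-pi)) = 0" by (simp add: sin_npi)
  ultimately show ?thesis by (simp add: integral_unique)
qed

lemma integral_Dk: "integral {-pi..pi} (Dk k) = pi"
proof -
  have "integral {-pi..pi} (Dk k) = integral {-pi..pi} (\<lambda>s. 1/2) + integral {-pi..pi} (\<lambda>s. \<Sum>j=1..k. cos (real j * s))"
    unfolding Dk_def
    by (intro integral_add integrable_continuous_real continuous_intros)
  also have "integral {-pi..pi} (\<lambda>s. \<Sum>j=1..k. cos (real j * s)) = (\<Sum>j=1..k. integral {-pi..pi} (\<lambda>s. cos (real j * s)))"
    by (intro integral_sum integrable_continuous_real continuous_intros) auto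
  also have "\<dots> = 0" by (intro sum.neutral) (auto intro: integral_cos_j)
  finally show ?thesis by simp
qed



lemma S_rep:
  assumes cont: "continuous_on UNIV f"
  shows "fourier_partial_sum f k x = (1/pi) * integral {-pi..pi} (\<lambda>t. f t * Dk k (t - x))"
proof -
  have cf: "continuous_on S f" for S using cont continuous_on_subset by blast
  have ic: "(\<lambda>t. f t * cos (real j * t)) integrable_on {-pi..pi}" for j
    by (intro integrable_continuous_real continuous_intros cf)
  have isn: "(\<lambda>t. f t * sin (real j * t)) integrable_on {-pi..pi}" for j
    by (intro integrable_continuous_real continuous_intros cf)
  have i0: "f integrable_on {-pi..pi}" by (intro integrable_continuous_real cf)
  have pt: "f t * Dk k (t - x) = f t / 2 + (\<Sum>j=1..k. cos (real j * x) * (f t * cos (real j * t)) + sin (real j * x) * (f t * sin (real j * t)))" for t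
  proof -
    have "cos (real j * (t - x)) = cos (real j * t) * cos (real j * x) + sin (real j * t) * sin (real j * x)" for j
    proof -
      have "real j * (t - x) = real j * t - real j * x" by (simp add: algebra_simps)
      then show ?thesis by (simp add: cos_diff)
    qed
    note cj = this
    have "f t * Dk k (t - x) = f t / 2 + (\<Sum>j=1..k. f t * cos (real j * (t - x)))"
      by (simp add: Dk_def distrib_left sum_distrib_left)
    also have "(\<Sum>j=1..k. f t * cos (real j * (t - x))) = (\<Sum>j=1..k. cos (real j * x) * (f t * cos (real j * t)) + sin (real j * x) * (f t * sin (real j * t)))"
    proof (rule sum.cong)
      fix j assume "j \<in> {1..k}"
      show "f t * cos (real j * (t - x)) = cos (real j * x) * (f t * cos (real j * t)) + sin (real j * x) * (f t * sin (real j * t))"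
        by (simp only: cj) (simp add: algebra_simps)
    qed simp
    finally show ?thesis .
  qed
  have "integral {-pi..pi} (\<lambda>t. f t * Dk k (t - x)) =
     integral {-pi..pi} (\<lambda>t. f t / 2 + (\<Sum>j=1..k. cos (real j * x) * (f t * cos (real j * t)) + sin (real j * x) * (f t * sin (real j * t))))"
    by (simp only: pt)
  also have "\<dots> = integral {-pi..pi} (\<lambda>t. f t / 2) + integral {-pi..pi} (\<lambda>t. \<Sum>j=1..k. cos (real j * x) * (f t * cos (real j * t)) + sin (real j * x) * (f t * sin (real j * t)))"
    by (intro integral_add integrable_sum integrable_add integrable_continuous_real continuous_intros cf finite_atLeastAtMost) auto
  also have "integral {-pi..pi} (\<lambda>t. \<Sum>j=1..k. cos (real j * x) * (f t * cos (real j * t)) + sin (real j * x) * (f t * sin (real j * t)))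
      = (\<Sum>j=1..k. integral {-pi..pi} (\<lambda>t. cos (real j * x) * (f t * cos (real j * t)) + sin (real j * x) * (f t * sin (real j * t))))"
    by (intro integral_sum integrable_add integrable_continuous_real continuous_intros cf finite_atLeastAtMost)
  also have "\<dots> = (\<Sum>j=1..k. cos (real j * x) * integral {-pi..pi} (\<lambda>t. f t * cos (real j * t)) + sin (real j * x) * integral {-pi..pi} (\<lambda>t. f t * sin (real j * t)))"
  proof (rule sum.cong)
    fix j assume "j \<in> {1..k}"
    show "integral {-pi..pi} (\<lambda>t. cos (real j * x) * (f t * cos (real j * t)) + sin (real j * x) * (f t * sin (real j * t)))
      = cos (real j * x) * integral {-pi..pi} (\<lambda>t. f t * cos (real j * t)) + sin (real j * x) * integral {-pi..pi} (\<lambda>t. f t * sin (real j * t))"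
    proof -
      have a: "integral {-pi..pi} (\<lambda>t. cos (real j * x) * (f t * cos (real j * t))) = cos (real j * x) * integral {-pi..pi} (\<lambda>t. f t * cos (real j * t))"
        by (rule integral_mult[OF ic[of j], symmetric])
      have b: "integral {-pi..pi} (\<lambda>t. sin (real j * x) * (f t * sin (real j * t))) = sin (real j * x) * integral {-pi..pi} (\<lambda>t. f t * sin (real j * t))"
        by (rule integral_mult[OF isn[of j], symmetric])
      have "integral {-pi..pi} (\<lambda>t. cos (real j * x) * (f t * cos (real j * t)) + sin (real j * x) * (f t * sin (real j * t)))
        = integral {-pi..pi} (\<lambda>t. cos (real j * x) * (f t * cos (real j * t))) + integral {-pi..pi} (\<lambda>t. sin (real j * x) * (f t * sin (real j * t)))"
        by (intro integral_add integrable_continuous_real continuous_intros cf)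
      then show ?thesis using a b by simp
    qed
  qed simp
  also have "integral {-pi..pi} (\<lambda>t. f t / 2) = integral {-pi..pi} f / 2"
    using i0 by (simp add: integral_divide)
  finally have I: "integral {-pi..pi} (\<lambda>t. f t * Dk k (t - x)) = integral {-pi..pi} f / 2 + (\<Sum>j=1..k. cos (real j * x) * integral {-pi..pi} (\<lambda>t. f t * cos (real j * t)) + sin (real j * x) * integral {-pi..pi} (\<lambda>t. f t * sin (real j * t)))" .
  have "(1/pi) * integral {-pi..pi} (\<lambda>t. f t * Dk k (t - x)) =
     (1/pi) * integral {-pi..pi} f / 2 + (\<Sum>j=1..k. (1/pi) * (cos (real j * x) * integral {-pi..pi} (\<lambda>t. f t * cos (real j * t)) + sin (real j * x) * integral {-pi..pi} (\<lambda>t. f t * sin (real j * t))))"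
    unfolding I by (simp add: distrib_left sum_distrib_left)
  also have "(\<Sum>j=1..k. (1/pi) * (cos (real j * x) * integral {-pi..pi} (\<lambda>t. f t * cos (real j * t)) + sin (real j * x) * integral {-pi..pi} (\<lambda>t. f t * sin (real j * t))))
     = (\<Sum>j=1..k. fourier_a f j * cos (real j * x) + fourier_b f j * sin (real j * x))"
    by (rule sum.cong) (simp_all add: fourier_a_def fourier_b_def algebra_simps)
  finally have "(1/pi) * integral {-pi..pi} (\<lambda>t. f t * Dk k (t - x)) =
     (1/pi) * integral {-pi..pi} f / 2 + (\<Sum>j=1..k. fourier_a f j * cos (real j * x) + fourier_b f j * sin (real j * x))" .
  moreover have "fourier_a f 0 = (1/pi) * integral {-pi..pi} f" by (simp add: fourier_a_def)
  ultimately show ?thesis by (simp add: fourier_partial_sum_def)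
qed

lemma fold_integral:
  fixes g :: "real \<Rightarrow> real"
  assumes "continuous_on {-pi..pi} g"
  shows "integral {-pi..pi} g = integral {0..pi} (\<lambda>s. g s + g (-s))"
proof -
  have ig: "g integrable_on {-pi..pi}" by (rule integrable_continuous_real[OF assms])
  have c1: "continuous_on {0..pi} g" by (rule continuous_on_subset[OF assms]) auto
  have c2: "continuous_on {0..pi} (\<lambda>s. g (-s))"
    by (rule continuous_on_compose2[OF assms]) (auto intro!: continuous_intros)
  have "integral {-pi..pi} g = integral {-pi..0} g + integral {0..pi} g"
    using Henstock_Kurzweil_Integration.integral_combine[where a="-pi" and c=0 and b=pi and f=g] ig by simp
  also have "integral {-pi..0} g = integral {0..pi} (\<lambda>s. g (-s))"
    using Henstock_Kurzweil_Integration.integral_reflect_real[of pi 0 "\<lambda>s. g (-s)"] by simp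
  also have "integral {0..pi} (\<lambda>s. g (-s)) + integral {0..pi} g = integral {0..pi} (\<lambda>s. g s + g (-s))"
    by (subst integral_add) (auto intro: integrable_continuous_real c1 c2)
  finally show ?thesis .
qed

lemma S_minus_f:
  assumes cont: "continuous_on UNIV f" and per: "\<And>x. f (x + 2 * pi) = f x"
  shows "fourier_partial_sum f k x - f x = (1/pi) * integral {0..pi} (\<lambda>s. (f (x + s) + f (x - s) - 2 * f x) * Dk k s)"
proof -
  have cf: "continuous_on S f" for S using cont continuous_on_subset by blast
  have cfc: "continuous_on S g \<Longrightarrow> continuous_on S (\<lambda>s. f (g s))" for S g using cont_comp[OF cont] .
  define h where "h t = f t * Dk k (t - x)" for t
  have hc: "continuous_on UNIV h" unfolding h_def by (intro continuous_intros cf)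
  have hp: "h (t + 2 * pi) = h t" for t
  proof -
    have "Dk k (t + 2 * pi - x) = Dk k (t - x)" using Dk_periodic[of k "t - x"] by (simp add: algebra_simps)
    then show ?thesis unfolding h_def using per by simp
  qed
  have "integral {-pi..pi} (\<lambda>t. f t * Dk k (t - x)) = integral {-pi..pi} (\<lambda>s. h (s + x))"
    using shift_integral[OF hc hp, of x] by (simp add: h_def)
  also have "(\<lambda>s. h (s + x)) = (\<lambda>s. f (x + s) * Dk k s)" by (simp add: h_def add.commute)
  finally have e1: "integral {-pi..pi} (\<lambda>t. f t * Dk k (t - x)) = integral {-pi..pi} (\<lambda>s. f (x + s) * Dk k s)" .
  have e2: "f x = (1/pi) * integral {-pi..pi} (\<lambda>s. f x * Dk k s)"
  proof -
    have "integral {-pi..pi} (\<lambda>s. f x * Dk k s) = f x * integral {-pi..pi} (Dk k)"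
      by (rule integral_mult[symmetric], intro integrable_continuous_real cont_Dk_UNIV[THEN continuous_on_subset]) auto
    then show ?thesis by (simp add: integral_Dk)
  qed
  have "fourier_partial_sum f k x - f x = (1/pi) * (integral {-pi..pi} (\<lambda>s. f (x + s) * Dk k s) - integral {-pi..pi} (\<lambda>s. f x * Dk k s))"
    unfolding S_rep[OF cont] e1 by (subst e2) (simp add: right_diff_distrib)
  also have "integral {-pi..pi} (\<lambda>s. f (x + s) * Dk k s) - integral {-pi..pi} (\<lambda>s. f x * Dk k s)
      = integral {-pi..pi} (\<lambda>s. (f (x + s) - f x) * Dk k s)"
    by (subst integral_diff[symmetric]) (auto intro!: integrable_continuous_real continuous_intros cf cfc simp: left_diff_distrib)
  also have "\<dots> = integral {0..pi} (\<lambda>s. (f (x + s) - f x) * Dk k s + (f (x + - s) - f x) * Dk k (- s))"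
    by (rule fold_integral) (intro continuous_intros cf cfc)
  also have "\<dots> = integral {0..pi} (\<lambda>s. (f (x + s) + f (x - s) - 2 * f x) * Dk k s)"
    by (simp add: Dk_even algebra_simps)
  finally show ?thesis .
qed

lemma T_rep:
  assumes cont: "continuous_on UNIV f" and per: "\<And>x. f (x + 2 * pi) = f x"
    and rs: "(\<Sum>k=0..n. a n k) = 1"
  shows "matrix_mean a f n x - f x = (1/pi) * integral {0..pi} (\<lambda>s. (f (x + s) + f (x - s) - 2 * f x) * (\<Sum>k\<le>n. a n k * Dk k s))"
proof -
  have cf: "continuous_on S f" for S using cont continuous_on_subset by blast
  have cfc: "continuous_on S g \<Longrightarrow> continuous_on S (\<lambda>s. f (g s))" for S g using cont_comp[OF cont] .
  define \<psi> where "\<psi> s = f (x + s) + f (x - s) - 2 * f x" for s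
  have "matrix_mean a f n x - f x = (\<Sum>k\<le>n. a n k * fourier_partial_sum f k x) - (\<Sum>k\<le>n. a n k) * f x"
    using rs by (simp add: matrix_mean_def atLeast0AtMost)
  also have "\<dots> = (\<Sum>k\<le>n. a n k * (fourier_partial_sum f k x - f x))"
    by (simp add: sum_distrib_right sum_subtractf right_diff_distrib)
  also have "\<dots> = (\<Sum>k\<le>n. (1/pi) * integral {0..pi} (\<lambda>s. a n k * (\<psi> s * Dk k s)))"
  proof (rule sum.cong)
    fix k assume "k \<in> {..n}"
    have "integral {0..pi} (\<lambda>s. a n k * (\<psi> s * Dk k s)) = a n k * integral {0..pi} (\<lambda>s. \<psi> s * Dk k s)"
      by (rule integral_mult[symmetric]) (unfold \<psi>_def, intro integrable_continuous_real continuous_intros cf cfc)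
    then show "a n k * (fourier_partial_sum f k x - f x) = (1/pi) * integral {0..pi} (\<lambda>s. a n k * (\<psi> s * Dk k s))"
      unfolding S_minus_f[OF cont per] \<psi>_def by simp
  qed simp
  also have "\<dots> = (1/pi) * integral {0..pi} (\<lambda>s. \<Sum>k\<le>n. a n k * (\<psi> s * Dk k s))"
    by (subst integral_sum) (auto simp: sum_distrib_left \<psi>_def intro!: integrable_continuous_real continuous_intros cf cfc)
  also have "(\<lambda>s. \<Sum>k\<le>n. a n k * (\<psi> s * Dk k s)) = (\<lambda>s. \<psi> s * (\<Sum>k\<le>n. a n k * Dk k s))"
    by (simp add: sum_distrib_left algebra_simps)
  finally show ?thesis by (simp add: \<psi>_def)
qed



lemma f_bounded:
  fixes f :: "real \<Rightarrow> real"
  assumes cont: "continuous_on UNIV f" and per: "\<And>x. f (x + 2 * pi) = f x"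
  shows "\<exists>M\<ge>0. \<forall>x. \<bar>f x\<bar> \<le> M"
proof -
  have "compact (f ` {0..2*pi})"
    by (rule compact_continuous_image) (use cont continuous_on_subset in auto)
  then obtain M where M: "M > 0" "\<And>y. y \<in> f ` {0..2*pi} \<Longrightarrow> norm y \<le> M"
    using compact_imp_bounded bounded_pos by metis
  have "\<bar>f x\<bar> \<le> M" for x
  proof -
    obtain y where "0 \<le> y" "y \<le> 2 * pi" "f x = f y" using per_reduce[of f x] per by blast
    then show ?thesis using M(2)[of "f y"] by auto
  qed
  then show ?thesis using M(1) by (intro exI[of _ M]) auto
qed

lemma modulus_props:
  fixes f :: "real \<Rightarrow> real"
  assumes cont: "continuous_on UNIV f" and per: "\<And>x. f (x + 2 * pi) = f x"
  shows "\<exists>M\<ge>0. (\<forall>x h \<delta>. \<bar>h\<bar> \<le> \<delta> \<longrightarrow> \<bar>f (x + h) - f x\<bar> \<le> modulus_cont f \<delta>)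
      \<and> (\<forall>\<delta>. 0 \<le> \<delta> \<longrightarrow> 0 \<le> modulus_cont f \<delta> \<and> modulus_cont f \<delta> \<le> M)
      \<and> (\<forall>\<delta>1 \<delta>2. 0 \<le> \<delta>1 \<and> \<delta>1 \<le> \<delta>2 \<longrightarrow> modulus_cont f \<delta>1 \<le> modulus_cont f \<delta>2)"
proof -
  obtain B where B: "B \<ge> 0" "\<And>x. \<bar>f x\<bar> \<le> B" using f_bounded[OF cont per] by blast
  define W where "W \<delta> = {\<bar>f (x + h) - f x\<bar> | x h. \<bar>h\<bar> \<le> \<delta>}" for \<delta>
  have om: "modulus_cont f \<delta> = Sup (W \<delta>)" for \<delta> by (simp add: modulus_cont_def W_def)
  have bdd: "bdd_above (W \<delta>)" for \<delta>
  proof -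
    have "z \<le> 2 * B" if "z \<in> W \<delta>" for z
    proof -
      from that obtain x h where "z = \<bar>f (x + h) - f x\<bar>" by (auto simp: W_def)
      then show ?thesis using B(2)[of "x + h"] B(2)[of x] by linarith
    qed
    then show ?thesis by (rule bdd_aboveI)
  qed
  have ne: "W \<delta> \<noteq> {}" if "0 \<le> \<delta>" for \<delta>
    using that unfolding W_def by (auto intro!: exI[of _ 0])
  have p1: "\<bar>f (x + h) - f x\<bar> \<le> modulus_cont f \<delta>" if "\<bar>h\<bar> \<le> \<delta>" for x h \<delta>
    unfolding om by (rule cSup_upper[OF _ bdd]) (use that in \<open>auto simp: W_def\<close>)
  have p2: "0 \<le> modulus_cont f \<delta> \<and> modulus_cont f \<delta> \<le> 2 * B" if "0 \<le> \<delta>" for \<delta>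
  proof
    show "0 \<le> modulus_cont f \<delta>" using p1[of 0 \<delta> 0] that by simp
    show "modulus_cont f \<delta> \<le> 2 * B" unfolding om
    proof (rule cSup_least[OF ne[OF that]])
      fix z assume "z \<in> W \<delta>"
      then obtain x h where "z = \<bar>f (x + h) - f x\<bar>" by (auto simp: W_def)
      then show "z \<le> 2 * B" using B(2)[of "x + h"] B(2)[of x] by linarith
    qed
  qed
  have p3: "modulus_cont f \<delta>1 \<le> modulus_cont f \<delta>2" if "0 \<le> \<delta>1" "\<delta>1 \<le> \<delta>2" for \<delta>1 \<delta>2
    unfolding om
    by (rule cSup_subset_mono[OF ne[OF that(1)] bdd]) (use that in \<open>fastforce simp: W_def\<close>)
  show ?thesis using p1 p2 p3 B(1) by (intro exI[of _ "2 * B"]) auto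
qed



lemma om_int:
  fixes om :: "real \<Rightarrow> real"
  assumes mono: "\<And>a b. 0 \<le> a \<Longrightarrow> a \<le> b \<Longrightarrow> om a \<le> om b"
    and nn: "\<And>d. 0 \<le> d \<Longrightarrow> 0 \<le> om d" and u: "0 < u"
  shows "(\<lambda>t. om t / t^2) integrable_on {u..v}"
proof -
  have m1: "mono_on {u..v} (\<lambda>t. om t / u^2)"
    by (rule mono_onI) (use mono u in \<open>auto intro!: divide_right_mono\<close>)
  have m2: "mono_on {u..v} (\<lambda>t. om t * (1 / u^2 - 1 / t^2))"
  proof (rule mono_onI)
    fix r s assume rs: "r \<in> {u..v}" "s \<in> {u..v}" "r \<le> s"
    have "1 / r^2 \<le> 1 / u^2" using rs u by (intro divide_left_mono power_mono mult_pos_pos) auto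
    moreover have "1 / s^2 \<le> 1 / r^2" using rs u by (intro divide_left_mono power_mono mult_pos_pos) auto
    moreover have "om r \<le> om s" using rs u by (intro mono) auto
    moreover have "0 \<le> om r" using rs u by (intro nn) auto
    ultimately show "om r * (1 / u^2 - 1 / r^2) \<le> om s * (1 / u^2 - 1 / s^2)"
      by (intro mult_mono) auto
  qed
  have "(\<lambda>t. om t / u^2 - om t * (1 / u^2 - 1 / t^2)) integrable_on {u..v}"
    by (intro integrable_diff integrable_on_mono_on m1 m2)
  then show ?thesis
    by (rule integrable_eq) (use u in \<open>auto simp: algebra_simps\<close>)
qed

lemma dini_pt:
  fixes om :: "real \<Rightarrow> real"
  assumes mono: "\<And>a b. 0 \<le> a \<Longrightarrow> a \<le> b \<Longrightarrow> om a \<le> om b"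
    and nn: "\<And>d. 0 \<le> d \<Longrightarrow> 0 \<le> om d" and u: "0 < u" "2 * u \<le> pi"
  shows "om u / u \<le> 2 * integral {u..pi} (\<lambda>t. om t / t^2)"
proof -
  have hi: "((\<lambda>t. om u / t^2) has_integral (- om u / (2 * u) - (- om u / u))) {u..2*u}"
  proof (rule fundamental_theorem_of_calculus)
    show "u \<le> 2 * u" using u by simp
    fix x assume x: "x \<in> {u..2*u}"
    then have xp: "x > 0" using u by auto
    have "((\<lambda>t. - om u / t) has_real_derivative (om u / x^2)) (at x)"
      using xp by (auto intro!: derivative_eq_intros simp: power2_eq_square field_simps)
    then show "((\<lambda>t. - om u / t) has_vector_derivative om u / x^2) (at x within {u..2*u})"
      by (simp add: has_real_derivative_iff_has_vector_derivative has_vector_derivative_at_within)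
  qed
  have e: "- om u / (2 * u) - (- om u / u) = om u / u / 2" using u by (simp add: field_simps)
  have "om u / u / 2 = integral {u..2*u} (\<lambda>t. om u / t^2)" using hi e by (simp add: integral_unique)
  also have "\<dots> \<le> integral {u..2*u} (\<lambda>t. om t / t^2)"
  proof (rule integral_le)
    show "(\<lambda>t. om u / t^2) integrable_on {u..2*u}" using hi by blast
    show "(\<lambda>t. om t / t^2) integrable_on {u..2*u}" by (rule om_int[OF mono nn u(1)])
    fix t assume "t \<in> {u..2*u}"
    then show "om u / t^2 \<le> om t / t^2" using u by (intro divide_right_mono mono) auto
  qed
  also have "\<dots> \<le> integral {u..pi} (\<lambda>t. om t / t^2)"
    by (rule integral_subset_le) (use u in \<open>auto intro!: om_int[OF mono nn u(1)] nn divide_nonneg_nonneg\<close>)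
  finally show ?thesis by simp
qed



lemma main_bound:
  fixes f :: "real \<Rightarrow> real" and r :: "nat \<Rightarrow> real" and om H :: "real \<Rightarrow> real"
  assumes cont: "continuous_on UNIV f"
    and rnn: "\<And>k. r k \<ge> 0" and rs: "(\<Sum>k\<le>n. r k) = 1"
    and beta: "\<beta> \<ge> 0" and C0: "C0 \<ge> 0"
    and rcond: "(\<Sum>k<n. (real k + 1) powr \<beta> *
          \<bar>r k / (real k + 1) powr \<beta> - r (k + 1) / (real k + 2) powr \<beta>\<bar>) \<le> C0 * r n"
    and \<alpha>: "\<alpha> = r n" "0 < \<alpha>" "\<alpha> \<le> 1"
    and omf: "\<And>x h \<delta>. \<bar>h\<bar> \<le> \<delta> \<Longrightarrow> \<bar>f (x + h) - f x\<bar> \<le> om \<delta>"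
    and mono: "\<And>a b. 0 \<le> a \<Longrightarrow> a \<le> b \<Longrightarrow> om a \<le> om b"
    and nn: "\<And>d. 0 \<le> d \<Longrightarrow> 0 \<le> om d"
    and C1: "C1 \<ge> 0" "\<And>u. 0 < u \<Longrightarrow> u \<le> pi \<Longrightarrow> integral {u..pi} (\<lambda>t. om t / t^2) \<le> C1 * H u"
    and Hint: "H integrable_on {0..\<alpha>}" and C2: "integral {0..\<alpha>} H \<le> C2 * (\<alpha> * H \<alpha>)"
  shows "\<bar>(1/pi) * integral {0..pi} (\<lambda>s. (f (x + s) + f (x - s) - 2 * f x) * (\<Sum>k\<le>n. r k * Dk k s))\<bar>
      \<le> (16 * C1 * C2 + 128 * (1 + C0) * C1) / pi * (\<alpha> * H \<alpha>)"
proof -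
  have cf: "continuous_on S f" for S using cont continuous_on_subset by blast
  have cfc: "continuous_on S g \<Longrightarrow> continuous_on S (\<lambda>s. f (g s))" for S g using cont_comp[OF cont] .
  define \<psi> where "\<psi> s = f (x + s) + f (x - s) - 2 * f x" for s
  define K where "K s = (\<Sum>k\<le>n. r k * Dk k s)" for s
  define \<Phi> where "\<Phi> s = \<psi> s * K s" for s
  have \<Phi>int: "\<Phi> integrable_on {u..v}" for u v
    unfolding \<Phi>_def \<psi>_def K_def by (intro integrable_continuous_real continuous_intros cf cfc)
  have \<psi>b: "\<bar>\<psi> s\<bar> \<le> 2 * om s" if "0 \<le> s" for s
  proof -
    have "\<bar>f (x + s) - f x\<bar> \<le> om s" using omf[of s s x] that by simp
    moreover have "\<bar>f (x + - s) - f x\<bar> \<le> om s" using omf[of "-s" s x] that by simp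
    ultimately show ?thesis unfolding \<psi>_def by simp
  qed
  have pi2: "2 < pi" using pi_gt3 by simp
  have \<alpha>pi: "\<alpha> \<le> pi" using \<alpha> pi2 by simp
  have G\<alpha>: "integral {\<alpha>..pi} (\<lambda>t. om t / t^2) \<le> C1 * H \<alpha>" using C1(2) \<alpha> \<alpha>pi by simp
  have near: "\<bar>integral {0..\<alpha>} \<Phi>\<bar> \<le> 16 * C1 * C2 * (\<alpha> * H \<alpha>)"
  proof -
    define g where "g s = (if s = 0 then 0 else 16 * C1 * H s)" for s
    have Hc: "(\<lambda>s. 16 * C1 * H s) integrable_on {0..\<alpha>}"
      using integrable_cmul[OF Hint, of "16 * C1"] by simp
    have gi: "g integrable_on {0..\<alpha>}"
      by (rule integrable_spike[OF Hc, of "{0}"]) (auto simp: g_def)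
    have "integral {0..\<alpha>} g = integral {0..\<alpha>} (\<lambda>s. 16 * C1 * H s)"
      by (rule integral_spike[of "{0}"]) (auto simp: g_def)
    also have "\<dots> = 16 * C1 * integral {0..\<alpha>} H"
      by (rule integral_mult[OF Hint, symmetric])
    finally have gI: "integral {0..\<alpha>} g = 16 * C1 * integral {0..\<alpha>} H" .
    have "\<bar>integral {0..\<alpha>} \<Phi>\<bar> \<le> integral {0..\<alpha>} g"
    proof (rule integral_norm_bound_integral[where f=\<Phi>, simplified real_norm_def])
      show "\<Phi> integrable_on {0..\<alpha>}" by (rule \<Phi>int)
      show "g integrable_on {0..\<alpha>}" by (rule gi)
      fix s assume s: "s \<in> {0..\<alpha>}"
      show "\<bar>\<Phi> s\<bar> \<le> g s"
      proof (cases "s = 0")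
        case True then show ?thesis by (simp add: g_def \<Phi>_def \<psi>_def)
      next
        case False
        then have sp: "0 < s" "s \<le> \<alpha>" using s by auto
        have spi: "s \<le> pi" using sp \<alpha>pi by simp
        have Kb: "\<bar>K s\<bar> \<le> 4 / s" unfolding K_def by (rule K_small[OF sp(1) spi rnn rs])
        have "\<bar>\<Phi> s\<bar> = \<bar>\<psi> s\<bar> * \<bar>K s\<bar>" by (simp add: \<Phi>_def abs_mult)
        also have "\<dots> \<le> (2 * om s) * (4 / s)"
          using \<psi>b[of s] Kb sp by (intro mult_mono) auto
        also have "\<dots> = 8 * (om s / s)" by simp
        also have "\<dots> \<le> 8 * (2 * integral {s..pi} (\<lambda>t. om t / t^2))"
          using dini_pt[of om s, OF mono nn sp(1)] sp \<alpha> pi2 by simp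
        also have "\<dots> \<le> 16 * (C1 * H s)" using C1(2)[OF sp(1) spi] by simp
        finally show ?thesis using False by (simp add: g_def)
      qed
    qed
    also have "\<dots> \<le> 16 * C1 * (C2 * (\<alpha> * H \<alpha>))"
      unfolding gI using C2 C1(1) by (intro mult_left_mono) auto
    finally show ?thesis by simp
  qed
  have far: "\<bar>integral {\<alpha>..pi} \<Phi>\<bar> \<le> 128 * (1 + C0) * C1 * (\<alpha> * H \<alpha>)"
  proof -
    have oi: "(\<lambda>t. om t / t^2) integrable_on {\<alpha>..pi}" by (rule om_int[of om, OF mono nn \<alpha>(2)])
    have "\<bar>integral {\<alpha>..pi} \<Phi>\<bar> \<le> integral {\<alpha>..pi} (\<lambda>t. 128 * (1 + C0) * \<alpha> * (om t / t^2))"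
    proof (rule integral_norm_bound_integral[where f=\<Phi>, simplified real_norm_def])
      show "\<Phi> integrable_on {\<alpha>..pi}" by (rule \<Phi>int)
      show "(\<lambda>t. 128 * (1 + C0) * \<alpha> * (om t / t^2)) integrable_on {\<alpha>..pi}"
        using integrable_cmul[OF oi, of "128 * (1 + C0) * \<alpha>"] by simp
      fix s assume s: "s \<in> {\<alpha>..pi}"
      then have sp: "0 < s" "s \<le> pi" using \<alpha> by auto
      have Kb: "\<bar>K s\<bar> \<le> 64 * (1 + C0) * r n / s^2"
        unfolding K_def by (rule K_large[OF sp beta rnn C0 rcond])
      have "\<bar>\<Phi> s\<bar> = \<bar>\<psi> s\<bar> * \<bar>K s\<bar>" by (simp add: \<Phi>_def abs_mult)
      also have "\<dots> \<le> (2 * om s) * (64 * (1 + C0) * r n / s^2)"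
        using \<psi>b[of s] Kb sp by (intro mult_mono) auto
      also have "\<dots> = 128 * (1 + C0) * \<alpha> * (om s / s^2)" using \<alpha>(1) by simp
      finally show "\<bar>\<Phi> s\<bar> \<le> 128 * (1 + C0) * \<alpha> * (om s / s^2)" .
    qed
    also have "\<dots> = 128 * (1 + C0) * \<alpha> * integral {\<alpha>..pi} (\<lambda>t. om t / t^2)"
      by (rule integral_mult[OF oi, symmetric])
    also have "\<dots> \<le> 128 * (1 + C0) * \<alpha> * (C1 * H \<alpha>)"
      using G\<alpha> \<alpha> C0 by (intro mult_left_mono) auto
    finally show ?thesis by (simp add: algebra_simps)
  qed
  have "integral {0..pi} \<Phi> = integral {0..\<alpha>} \<Phi> + integral {\<alpha>..pi} \<Phi>"
    using Henstock_Kurzweil_Integration.integral_combine[where a=0 and c=\<alpha> and b=pi and f=\<Phi>] \<Phi>int \<alpha> \<alpha>pi by simp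
  then have "\<bar>integral {0..pi} \<Phi>\<bar> \<le> (16 * C1 * C2 + 128 * (1 + C0) * C1) * (\<alpha> * H \<alpha>)"
    using near far by (simp add: algebra_simps)
  then have "\<bar>(1/pi) * integral {0..pi} \<Phi>\<bar> \<le> (16 * C1 * C2 + 128 * (1 + C0) * C1) * (\<alpha> * H \<alpha>) / pi"
    by (simp add: abs_mult divide_right_mono)
  moreover have "\<Phi> = (\<lambda>s. (f (x + s) + f (x - s) - 2 * f x) * (\<Sum>k\<le>n. r k * Dk k s))"
    by (simp add: fun_eq_iff \<Phi>_def \<psi>_def K_def)
  ultimately show ?thesis by simp
qed

lemma last_pos:
  fixes r :: "nat \<Rightarrow> real"
  assumes rnn: "\<And>k. r k \<ge> 0" and rs: "(\<Sum>k\<le>n. r k) = 1"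
    and rcond: "(\<Sum>k<n. (real k + 1) powr \<beta> *
          \<bar>r k / (real k + 1) powr \<beta> - r (k + 1) / (real k + 2) powr \<beta>\<bar>) \<le> C0 * r n"
  shows "r n > 0"
proof (rule ccontr)
  assume "\<not> r n > 0"
  then have rn: "r n = 0" using rnn[of n] by simp
  have terms: "(real k + 1) powr \<beta> * \<bar>r k / (real k + 1) powr \<beta> - r (k + 1) / (real k + 2) powr \<beta>\<bar> = 0"
    if "k < n" for k
  proof -
    have "(\<Sum>k<n. (real k + 1) powr \<beta> *
          \<bar>r k / (real k + 1) powr \<beta> - r (k + 1) / (real k + 2) powr \<beta>\<bar>) = 0"
    proof -
      have "0 \<le> (\<Sum>k<n. (real k + 1) powr \<beta> *
          \<bar>r k / (real k + 1) powr \<beta> - r (k + 1) / (real k + 2) powr \<beta>\<bar>)"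
        by (intro sum_nonneg mult_nonneg_nonneg) auto
      then show ?thesis using rcond rn by simp
    qed
    then show ?thesis using that by (subst (asm) sum_nonneg_eq_0_iff) auto
  qed
  have eq: "r k / (real k + 1) powr \<beta> = r (k + 1) / (real k + 2) powr \<beta>" if "k < n" for k
    using terms[OF that] by simp
  have zero: "r (n - i) = 0" if "i \<le> n" for i
    using that
  proof (induction i)
    case 0 then show ?case using rn by simp
  next
    case (Suc i)
    define k where "k = n - Suc i"
    have kn: "k < n" and k1: "k + 1 = n - i" using Suc.prems by (auto simp: k_def)
    have "r (k + 1) = 0" using k1 Suc by simp
    then have "r k / (real k + 1) powr \<beta> = 0" using eq[OF kn] by simp
    then show ?case by (simp add: k_def)
  qed
  have "r k = 0" if "k \<le> n" for k using zero[of "n - k"] that by simp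
  then have "(\<Sum>k\<le>n. r k) = 0" by simp
  then show False using rs by simp
qed

theorem theorem3p1:
  fixes f :: "real \<Rightarrow> real" and a :: "nat \<Rightarrow> nat \<Rightarrow> real"
    and \<beta> :: real and H :: "real \<Rightarrow> real"
  assumes cont: "continuous_on UNIV f"
    and periodic: "\<And>x. f (x + 2 * pi) = f x"
    and lower: "\<And>n k. n < k \<Longrightarrow> a n k = 0"
    and nonneg: "\<And>n k. a n k \<ge> 0"
    and rowsum: "\<And>n. (\<Sum>k=0..n. a n k) = 1"
    and beta: "\<beta> \<ge> 0"
    and cond: "\<exists>C>0. \<forall>n. \<forall>m\<le>n.
       (\<Sum>k<m. (real k + 1) powr \<beta> *
          \<bar>a n k / (real k + 1) powr \<beta> - a n (k + 1) / (real k + 2) powr \<beta>\<bar>)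
       \<le> C * a n m"
    and H_nonneg: "\<And>u. 0 < u \<Longrightarrow> u \<le> pi \<Longrightarrow> H u \<ge> 0"
    and H1: "\<exists>C>0. \<forall>u. 0 < u \<and> u \<le> pi \<longrightarrow>
       integral {u..pi} (\<lambda>t. modulus_cont f t / t\<^sup>2) \<le> C * H u"
    and H2: "\<exists>C>0. \<forall>t. 0 < t \<and> t \<le> pi \<longrightarrow>
       H integrable_on {0..t} \<and> integral {0..t} H \<le> C * (t * H t)"
  shows "\<exists>C>0. \<forall>n. supnorm (\<lambda>x. matrix_mean a f n x - f x) \<le> C * (a n n * H (a n n))"
proof -
  obtain C0 where C0: "C0 > 0" "\<And>n m. m \<le> n \<Longrightarrow> (\<Sum>k<m. (real k + 1) powr \<beta> *
          \<bar>a n k / (real k + 1) powr \<beta> - a n (k + 1) / (real k + 2) powr \<beta>\<bar>) \<le> C0 * a n m"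
    using cond by blast
  obtain C1 where C1: "C1 > 0" "\<And>u. 0 < u \<Longrightarrow> u \<le> pi \<Longrightarrow>
       integral {u..pi} (\<lambda>t. modulus_cont f t / t\<^sup>2) \<le> C1 * H u"
    using H1 by blast
  obtain C2 where C2: "C2 > 0" "\<And>t. 0 < t \<Longrightarrow> t \<le> pi \<Longrightarrow>
       H integrable_on {0..t} \<and> integral {0..t} H \<le> C2 * (t * H t)"
    using H2 by blast
  obtain M where om: "\<And>x h \<delta>. \<bar>h\<bar> \<le> \<delta> \<Longrightarrow> \<bar>f (x + h) - f x\<bar> \<le> modulus_cont f \<delta>"
      "\<And>\<delta>. 0 \<le> \<delta> \<Longrightarrow> 0 \<le> modulus_cont f \<delta>"
      "\<And>\<delta>1 \<delta>2. 0 \<le> \<delta>1 \<Longrightarrow> \<delta>1 \<le> \<delta>2 \<Longrightarrow> modulus_cont f \<delta>1 \<le> modulus_cont f \<delta>2"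
    using modulus_props[OF cont periodic] by blast
  define CC where "CC = (16 * C1 * C2 + 128 * (1 + C0) * C1) / pi"
  have CC: "CC > 0" unfolding CC_def using C0 C1 C2 by (intro divide_pos_pos add_pos_pos mult_pos_pos) auto
  have pi2: "2 < pi" using pi_gt3 by simp
  show ?thesis
  proof (intro exI[of _ CC] conjI allI CC)
    fix n
    have rs: "(\<Sum>k\<le>n. a n k) = 1" using rowsum[of n] by (simp add: atLeast0AtMost)
    have rc: "(\<Sum>k<n. (real k + 1) powr \<beta> *
          \<bar>a n k / (real k + 1) powr \<beta> - a n (k + 1) / (real k + 2) powr \<beta>\<bar>) \<le> C0 * a n n"
      using C0(2)[of n n] by simp
    have apos: "0 < a n n" by (rule last_pos[where r="a n", OF nonneg rs rc])
    have ale: "a n n \<le> 1"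
    proof -
      have "a n n \<le> (\<Sum>k\<le>n. a n k)" by (rule member_le_sum) (auto intro: nonneg)
      then show ?thesis using rs by simp
    qed
    have api: "a n n \<le> pi" using ale pi2 by simp
    have bound: "\<bar>matrix_mean a f n x - f x\<bar> \<le> CC * (a n n * H (a n n))" for x
    proof -
      have "\<bar>matrix_mean a f n x - f x\<bar> = \<bar>(1/pi) * integral {0..pi} (\<lambda>s. (f (x + s) + f (x - s) - 2 * f x) * (\<Sum>k\<le>n. a n k * Dk k s))\<bar>"
        by (simp only: T_rep[OF cont periodic rowsum])
      also have "\<dots> \<le> (16 * C1 * C2 + 128 * (1 + C0) * C1) / pi * (a n n * H (a n n))"
      proof (rule main_bound[where r="a n" and om="modulus_cont f"])
        show "continuous_on UNIV f" by (rule cont)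
        show "\<And>k. 0 \<le> a n k" by (rule nonneg)
        show "(\<Sum>k\<le>n. a n k) = 1" by (rule rs)
        show "0 \<le> \<beta>" by (rule beta)
        show "0 \<le> C0" using C0 by simp
        show "(\<Sum>k<n. (real k + 1) powr \<beta> *
          \<bar>a n k / (real k + 1) powr \<beta> - a n (k + 1) / (real k + 2) powr \<beta>\<bar>) \<le> C0 * a n n" by (rule rc)
        show "a n n = a n n" "0 < a n n" "a n n \<le> 1" using apos ale by auto
        show "\<And>x h \<delta>. \<bar>h\<bar> \<le> \<delta> \<Longrightarrow> \<bar>f (x + h) - f x\<bar> \<le> modulus_cont f \<delta>" by (rule om(1))
        show "\<And>a b. 0 \<le> a \<Longrightarrow> a \<le> b \<Longrightarrow> modulus_cont f a \<le> modulus_cont f b" by (rule om(3))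
        show "\<And>d. 0 \<le> d \<Longrightarrow> 0 \<le> modulus_cont f d" by (rule om(2))
        show "0 \<le> C1" using C1 by simp
        show "\<And>u. 0 < u \<Longrightarrow> u \<le> pi \<Longrightarrow> integral {u..pi} (\<lambda>t. modulus_cont f t / t\<^sup>2) \<le> C1 * H u"
          by (rule C1(2))
        show "H integrable_on {0..a n n}" using C2(2)[OF apos api] by simp
        show "integral {0..a n n} H \<le> C2 * (a n n * H (a n n))" using C2(2)[OF apos api] by simp
      qed
      finally show ?thesis unfolding CC_def .
    qed
    show "supnorm (\<lambda>x. matrix_mean a f n x - f x) \<le> CC * (a n n * H (a n n))"
      unfolding supnorm_def by (rule cSUP_least) (auto intro: bound)
  qed
qed

end
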